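(* An abstract $b$-flip $f$ is non ambiguous if and only if (a) it is a sliding flip, and (b) for every oriented $(S,V)$ and every application of $f$ to a branched ideal triangulation $(T,b)$ of $(S,V)$ producing $(T',b')$, one has $S_\pm(T,b)=S_\pm(T',b')$. In that case the boundary $1$-cycles $\partial S_\pm$ are also preserved.
   Context: $(S,V)$: a closed surface with finite set of marked points, $\chi(S)-|V|<0$. A branching $b$ of an ideal triangulation (vertex set $V$) orients edges so that on each abstract triangle the orientations are induced by a total order $v_0<v_1<v_2$ of its vertices, edges pointing to the larger endpoint. An abstract $b$-flip acts on a quadrilateral $Q=t_1\cup t_2$ with diagonal $e$. It replaces $e$ by the other diagonal $e'$, oriented so that the result is branched with boundary edges of $Q$ unchanged. It is forced if it is the unique branched enhancement of the naked flip starting from $(t_1\cup t_2,b)$. It is non ambiguous if both it and its inverse $b$-flip are forced. It is a sliding flip if at least one of it and its inverse is forced. When $S$ is oriented, for a branched triangle $t$ set $*_{(t,b)}=+1$ if the orientation of $t$ given by $(v_0,v_1,v_2)$ agrees with that of $S$ and $-1$ otherwise. $S_\pm(T,b)$ is the union of the triangles with $*_{(t,b)}=\pm1$, so $S=S_+\cup S_-$, and $\partial S_\pm$ is the boundary $1$-cycle of the simplicial $2$-chain supported by $S_\pm$. *)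

theory Defs
  imports "HOL-Analysis.Analysis"
begin

text \<open>The abstract quadrilateral Q has four
distinct corners 0,1,2,3, realised in the plane as the corners of the unit square,
in counterclockwise cyclic order.  A branching is encoded
as a set D of directed edges (a,b), meaning the edge {a,b} points from a to b.\<close>

definition corner :: "nat \<Rightarrow> real \<times> real" where
  "corner i = (if i = 0 then (0,0) else if i = 1 then (1,0) else if i = 2 then (1,1) else (0,1))"

definition qdet :: "nat \<Rightarrow> nat \<Rightarrow> nat \<Rightarrow> real" where
  "qdet a b c = (fst (corner b) - fst (corner a)) * (snd (corner c) - snd (corner a))
              - (snd (corner b) - snd (corner a)) * (fst (corner c) - fst (corner a))"

definition bdry_edges :: "nat set set" where
  "bdry_edges = {{0,1},{1,2},{2,3},{3,0}}"

definition diag :: "bool \<Rightarrow> nat set" where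
  "diag d = (if d then {1,3} else {0,2})"

definition quad_tris :: "bool \<Rightarrow> nat set set" where
  "quad_tris d = (if d then {{0,1,3},{1,2,3}} else {{0,1,2},{0,2,3}})"

definition directed :: "nat set set \<Rightarrow> (nat \<times> nat) set" where
  "directed E = {(a,b). a \<noteq> b \<and> {a,b} \<in> E}"

definition orients :: "nat set set \<Rightarrow> (nat \<times> nat) set \<Rightarrow> bool" where
  "orients E D \<longleftrightarrow> D \<subseteq> directed E \<and>
     (\<forall>a b. (a,b) \<in> directed E \<longrightarrow> ((a,b) \<in> D \<longleftrightarrow> (b,a) \<notin> D))"

definition branched_tri :: "(nat \<times> nat) set \<Rightarrow> nat set \<Rightarrow> bool" where
  "branched_tri D t \<longleftrightarrow> (\<exists>v0 v1 v2. t = {v0,v1,v2} \<and> distinct [v0,v1,v2] \<and>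
      (v0,v1) \<in> D \<and> (v1,v2) \<in> D \<and> (v0,v2) \<in> D)"

definition branched_quad :: "bool \<Rightarrow> (nat \<times> nat) set \<Rightarrow> bool" where
  "branched_quad d D \<longleftrightarrow> orients (bdry_edges \<union> {diag d}) D \<and> (\<forall>t \<in> quad_tris d. branched_tri D t)"

definition b_flip :: "bool \<Rightarrow> (nat \<times> nat) set \<Rightarrow> (nat \<times> nat) set \<Rightarrow> bool" where
  "b_flip d D D' \<longleftrightarrow> branched_quad d D \<and> branched_quad (\<not> d) D' \<and>
     D \<inter> directed bdry_edges = D' \<inter> directed bdry_edges"

definition forced :: "bool \<Rightarrow> (nat \<times> nat) set \<Rightarrow> (nat \<times> nat) set \<Rightarrow> bool" where
  "forced d D D' \<longleftrightarrow> b_flip d D D' \<and> (\<forall>D''. b_flip d D D'' \<longrightarrow> D'' = D')"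

text \<open>The inverse of the flip (d,D,D') is the flip (\<not>d,D',D).\<close>
definition non_ambiguous :: "bool \<Rightarrow> (nat \<times> nat) set \<Rightarrow> (nat \<times> nat) set \<Rightarrow> bool" where
  "non_ambiguous d D D' \<longleftrightarrow> forced d D D' \<and> forced (\<not> d) D' D"

definition sliding :: "bool \<Rightarrow> (nat \<times> nat) set \<Rightarrow> (nat \<times> nat) set \<Rightarrow> bool" where
  "sliding d D D' \<longleftrightarrow> forced d D D' \<or> forced (\<not> d) D' D"

text \<open>Orientation of the ambient surface restricted to Q: eps = 1 if it agrees with the
counterclockwise orientation of the square, eps = -1 otherwise.  The sign *_(t,b) is
eps * sign(det(v0,v1,v2)); sgn_tri eps D t s says that it equals s.\<close>
definition sgn_tri :: "real \<Rightarrow> (nat \<times> nat) set \<Rightarrow> nat set \<Rightarrow> real \<Rightarrow> bool" where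
  "sgn_tri eps D t s \<longleftrightarrow> (\<exists>v0 v1 v2. t = {v0,v1,v2} \<and> distinct [v0,v1,v2] \<and>
      (v0,v1) \<in> D \<and> (v1,v2) \<in> D \<and> (v0,v2) \<in> D \<and> sgn (eps * qdet v0 v1 v2) = s)"

text \<open>S_s(T,b) \<inter> Q, as a point set in the plane (s = 1 or s = -1).\<close>
definition S_region :: "real \<Rightarrow> real \<Rightarrow> bool \<Rightarrow> (nat \<times> nat) set \<Rightarrow> (real \<times> real) set" where
  "S_region s eps d D = \<Union> {convex hull (corner ` t) | t. t \<in> quad_tris d \<and> sgn_tri eps D t s}"

text \<open>Coefficient of the directed edge (a,b) in the boundary of the triangle t,
t carrying the orientation of the surface.\<close>
definition tri_bdry :: "real \<Rightarrow> nat set \<Rightarrow> nat \<times> nat \<Rightarrow> real" where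
  "tri_bdry eps t e = (case e of (a,b) \<Rightarrow>
     if a \<in> t \<and> b \<in> t \<and> a \<noteq> b then (\<Sum>c \<in> t - {a,b}. eps * sgn (qdet a b c)) else 0)"

text \<open>The part inside Q of the boundary 1-cycle of the simplicial 2-chain supported by S_s.\<close>
definition S_bdry :: "real \<Rightarrow> real \<Rightarrow> bool \<Rightarrow> (nat \<times> nat) set \<Rightarrow> nat \<times> nat \<Rightarrow> real" where
  "S_bdry s eps d D e = (\<Sum>t \<in> {t \<in> quad_tris d. sgn_tri eps D t s}. tri_bdry eps t e)"

end

theory Submission
  imports Defs
begin


definition Hq :: "nat set \<Rightarrow> (real \<times> real) set" where
  "Hq t = convex hull (corner ` t)"

lemma H012: "Hq {0,1,2} = {(x,y). 0 \<le> y \<and> y \<le> x \<and> x \<le> 1}"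
proof -
  have "corner ` {0,1,2} = {(0,0),(1,0),(1,1)}" by (auto simp: corner_def)
  moreover have "convex hull {(0::real,0::real),(1,0),(1,1)} = {(x,y). 0 \<le> y \<and> y \<le> x \<and> x \<le> 1}"
    unfolding convex_hull_3
    apply auto
    subgoal for a b by (rule exI[of _ "1-a"], rule exI[of _ "a-b"]) auto
    done
  ultimately show ?thesis by (simp add: Hq_def)
qed

lemma H023: "Hq {0,2,3} = {(x,y). 0 \<le> x \<and> x \<le> y \<and> y \<le> 1}"
proof -
  have "corner ` {0,2,3} = {(0,0),(1,1),(0,1)}" by (auto simp: corner_def)
  moreover have "convex hull {(0::real,0::real),(1,1),(0,1)} = {(x,y). 0 \<le> x \<and> x \<le> y \<and> y \<le> 1}"
    unfolding convex_hull_3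
    apply auto
    subgoal for a b by (rule exI[of _ "1-b"], rule exI[of _ "b-a"]) auto
    done
  ultimately show ?thesis by (simp add: Hq_def)
qed

lemma H013: "Hq {0,1,3} = {(x,y). 0 \<le> x \<and> 0 \<le> y \<and> x + y \<le> 1}"
proof -
  have "corner ` {0,1,3} = {(0,0),(1,0),(0,1)}" by (auto simp: corner_def)
  moreover have "convex hull {(0::real,0::real),(1,0),(0,1)} = {(x,y). 0 \<le> x \<and> 0 \<le> y \<and> x + y \<le> 1}"
    unfolding convex_hull_3
    apply auto
    subgoal for a b by (rule exI[of _ "1-a-b"]) auto
    done
  ultimately show ?thesis by (simp add: Hq_def)
qed

lemma H123: "Hq {1,2,3} = {(x,y). x \<le> 1 \<and> y \<le> 1 \<and> 1 \<le> x + y}"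
proof -
  have "corner ` {1,2,3} = {(1,0),(1,1),(0,1)}" by (auto simp: corner_def)
  moreover have "convex hull {(1::real,0::real),(1,1),(0,1)} = {(x,y). x \<le> 1 \<and> y \<le> 1 \<and> 1 \<le> x + y}"
    unfolding convex_hull_3
    apply auto
    subgoal for a b by (rule exI[of _ "1-b"], rule exI[of _ "a+b-1"], rule conjI, simp, rule exI[of _ "1-a"]) auto
    done
  ultimately show ?thesis by (simp add: Hq_def)
qed

lemma neqI: "x \<in> A \<Longrightarrow> x \<notin> B \<Longrightarrow> A \<noteq> B \<and> B \<noteq> A" by blast
lemma neqI2: "x \<notin> A \<Longrightarrow> x \<in> B \<Longrightarrow> A \<noteq> B \<and> B \<noteq> A" by blast


lemma Hsq: "Hq {0,1,2} \<union> Hq {0,2,3} = Hq {0,1,3} \<union> Hq {1,2,3}"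
  unfolding H012 H023 H013 H123 by auto


lemma ne_by: "x \<in> A \<Longrightarrow> A \<noteq> {}" by auto

lemma Hne: "Hq {0,1,2} \<noteq> {}" "Hq {0,2,3} \<noteq> {}" "Hq {0,1,3} \<noteq> {}" "Hq {1,2,3} \<noteq> {}"
  unfolding H012 H023 H013 H123
  apply (rule ne_by[of "(0,0)"], simp)
  apply (rule ne_by[of "(0,0)"], simp)
  apply (rule ne_by[of "(0,0)"], simp)
  apply (rule ne_by[of "(1,1)"], simp)
  done


lemma Hneq:
  "Hq {0,1,2} \<noteq> Hq {0,1,3} \<and> Hq {0,1,3} \<noteq> Hq {0,1,2}"
  "Hq {0,1,2} \<noteq> Hq {1,2,3} \<and> Hq {1,2,3} \<noteq> Hq {0,1,2}"
  "Hq {0,2,3} \<noteq> Hq {0,1,3} \<and> Hq {0,1,3} \<noteq> Hq {0,2,3}"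
  "Hq {0,2,3} \<noteq> Hq {1,2,3} \<and> Hq {1,2,3} \<noteq> Hq {0,2,3}"
  "Hq {0,1,2} \<noteq> Hq {0,1,3} \<union> Hq {1,2,3} \<and> Hq {0,1,3} \<union> Hq {1,2,3} \<noteq> Hq {0,1,2}"
  "Hq {0,2,3} \<noteq> Hq {0,1,3} \<union> Hq {1,2,3} \<and> Hq {0,1,3} \<union> Hq {1,2,3} \<noteq> Hq {0,2,3}"
  "Hq {0,1,3} \<noteq> Hq {0,1,2} \<union> Hq {0,2,3} \<and> Hq {0,1,2} \<union> Hq {0,2,3} \<noteq> Hq {0,1,3}"
  "Hq {1,2,3} \<noteq> Hq {0,1,2} \<union> Hq {0,2,3} \<and> Hq {0,1,2} \<union> Hq {0,2,3} \<noteq> Hq {1,2,3}"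
  unfolding H012 H023 H013 H123
  apply (rule neqI[of "(1,1)"], simp, simp)
  apply (rule neqI[of "(0,0)"], simp, simp)
  apply (rule neqI[of "(1,1)"], simp, simp)
  apply (rule neqI[of "(0,0)"], simp, simp)
  apply (rule neqI2[of "(0,1)"], simp, simp)
  apply (rule neqI2[of "(1,0)"], simp, simp)
  apply (rule neqI2[of "(1,1)"], simp, simp)
  apply (rule neqI2[of "(0,0)"], simp, simp)
  done


lemma dir_bd: "directed bdry_edges = {(0,1),(1,0),(1,2),(2,1),(2,3),(3,2),(3,0),(0,3)}"
  unfolding directed_def bdry_edges_def by (auto simp: doubleton_eq_iff)
lemma dir_all: "directed (bdry_edges \<union> {diag d}) = directed bdry_edges \<union>
   (if d then {(1,3),(3,1)} else {(0,2),(2,0)})"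
  unfolding directed_def diag_def by (auto simp: doubleton_eq_iff)
definition mkB :: "bool \<Rightarrow> bool \<Rightarrow> bool \<Rightarrow> bool \<Rightarrow> (nat \<times> nat) set" where
  "mkB p0 p1 p2 p3 = (if p0 then {(0,1)} else {(1,0)}) \<union> (if p1 then {(1,2)} else {(2,1)})
     \<union> (if p2 then {(2,3)} else {(3,2)}) \<union> (if p3 then {(3,0)} else {(0,3)})"

definition mkX :: "bool \<Rightarrow> bool \<Rightarrow> (nat \<times> nat) set" where
  "mkX d x = (if d then (if x then {(1,3)} else {(3,1)}) else (if x then {(0,2)} else {(2,0)}))"

definition mkD where "mkD d p0 p1 p2 p3 x = mkB p0 p1 p2 p3 \<union> mkX d x"


lemma mem_mkB: "e \<in> mkB p0 p1 p2 p3 \<longleftrightarrow>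
   (e = (0,1) \<and> p0 \<or> e = (1,0) \<and> \<not>p0 \<or> e = (1,2) \<and> p1 \<or> e = (2,1) \<and> \<not>p1 \<or>
    e = (2,3) \<and> p2 \<or> e = (3,2) \<and> \<not>p2 \<or> e = (3,0) \<and> p3 \<or> e = (0,3) \<and> \<not>p3)"
  unfolding mkB_def by auto

lemma mem_mkX: "e \<in> mkX d x \<longleftrightarrow>
   (d \<and> (e = (1,3) \<and> x \<or> e = (3,1) \<and> \<not>x) \<or> \<not>d \<and> (e = (0,2) \<and> x \<or> e = (2,0) \<and> \<not>x))"
  unfolding mkX_def by auto

lemma mkB_int: "mkD d p0 p1 p2 p3 x \<inter> directed bdry_edges = mkB p0 p1 p2 p3"
  unfolding mkD_def dir_bd by (auto simp: mem_mkB mem_mkX)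

lemma mkB_inj: "mkB p0 p1 p2 p3 = mkB q0 q1 q2 q3 \<longleftrightarrow> p0 = q0 \<and> p1 = q1 \<and> p2 = q2 \<and> p3 = q3"
proof
  assume h: "mkB p0 p1 p2 p3 = mkB q0 q1 q2 q3"
  have "(0,1) \<in> mkB p0 p1 p2 p3 \<longleftrightarrow> (0,1) \<in> mkB q0 q1 q2 q3"
   "(1,2) \<in> mkB p0 p1 p2 p3 \<longleftrightarrow> (1,2) \<in> mkB q0 q1 q2 q3"
   "(2,3) \<in> mkB p0 p1 p2 p3 \<longleftrightarrow> (2,3) \<in> mkB q0 q1 q2 q3"
   "(3,0) \<in> mkB p0 p1 p2 p3 \<longleftrightarrow> (3,0) \<in> mkB q0 q1 q2 q3" using h by auto
  then show "p0 = q0 \<and> p1 = q1 \<and> p2 = q2 \<and> p3 = q3" unfolding mem_mkB by simp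
qed simp


lemma dir_cases:
  assumes "e \<in> directed (bdry_edges \<union> {diag d})"
  shows "e=(0,1) \<or> e=(1,0) \<or> e=(1,2) \<or> e=(2,1) \<or> e=(2,3) \<or> e=(3,2) \<or> e=(3,0) \<or> e=(0,3) \<or>
    (d \<and> (e=(1,3) \<or> e=(3,1))) \<or> (\<not>d \<and> (e=(0,2) \<or> e=(2,0)))"
  using assms unfolding dir_all dir_bd by (cases d) auto

lemma mkB_sub: "mkB p0 p1 p2 p3 \<subseteq> directed bdry_edges"
  unfolding dir_bd mkB_def by (cases p0; cases p1; cases p2; cases p3) simp_all

lemma mkX_sub: "mkX d x \<subseteq> (if d then {(1,3),(3,1)} else {(0,2),(2,0)})"
  unfolding mkX_def by (cases d; cases x) simp_all

lemma mkD_sub: "mkD d p0 p1 p2 p3 x \<subseteq> directed (bdry_edges \<union> {diag d})"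
  unfolding dir_all mkD_def using mkB_sub mkX_sub by blast

lemma orients_mk: "orients (bdry_edges \<union> {diag d}) D \<longleftrightarrow> (\<exists>p0 p1 p2 p3 x. D = mkD d p0 p1 p2 p3 x)"
proof
  assume o: "orients (bdry_edges \<union> {diag d}) D"
  have sub: "D \<subseteq> directed (bdry_edges \<union> {diag d})" and
    ex: "\<And>a b. (a,b) \<in> directed (bdry_edges \<union> {diag d}) \<Longrightarrow> ((a,b) \<in> D \<longleftrightarrow> (b,a) \<notin> D)"
    using o unfolding orients_def by auto
  have f: "(1,0) \<in> D \<longleftrightarrow> (0,1) \<notin> D" "(2,1) \<in> D \<longleftrightarrow> (1,2) \<notin> D" "(3,2) \<in> D \<longleftrightarrow> (2,3) \<notin> D"
      "(0,3) \<in> D \<longleftrightarrow> (3,0) \<notin> D"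
    by (rule ex, subst dir_all, simp add: dir_bd)+
  have g: "d \<Longrightarrow> (3,1) \<in> D \<longleftrightarrow> (1,3) \<notin> D" "\<not> d \<Longrightarrow> (2,0) \<in> D \<longleftrightarrow> (0,2) \<notin> D"
    by (rule ex, subst dir_all, simp add: dir_bd)+
  define M where "M = mkD d ((0,1) \<in> D) ((1,2) \<in> D) ((2,3) \<in> D) ((3,0) \<in> D) (if d then (1,3) \<in> D else (0,2) \<in> D)"
  have m: "e \<in> D \<longleftrightarrow> e \<in> M" if "e \<in> directed (bdry_edges \<union> {diag d})" for e
    using dir_cases[OF that]
    by (elim disjE conjE; simp add: M_def mkD_def mem_mkB mem_mkX f g f[unfolded One_nat_def] g[unfolded One_nat_def])
  have "D = M"
  proof (rule set_eqI)
    fix e show "e \<in> D \<longleftrightarrow> e \<in> M"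
    proof
      assume "e \<in> D" then show "e \<in> M" using m sub by blast
    next
      assume "e \<in> M" then have "e \<in> directed (bdry_edges \<union> {diag d})" using mkD_sub unfolding M_def by blast
      then show "e \<in> D" using m \<open>e \<in> M\<close> by blast
    qed
  qed
  then show "\<exists>p0 p1 p2 p3 x. D = mkD d p0 p1 p2 p3 x" unfolding M_def by blast
next
  assume "\<exists>p0 p1 p2 p3 x. D = mkD d p0 p1 p2 p3 x"
  then obtain p0 p1 p2 p3 x where D: "D = mkD d p0 p1 p2 p3 x" by blast
  show "orients (bdry_edges \<union> {diag d}) D"
    unfolding orients_def
  proof (intro conjI allI impI)
    show "D \<subseteq> directed (bdry_edges \<union> {diag d})"
      unfolding D by (rule mkD_sub)
    fix a b assume "(a,b) \<in> directed (bdry_edges \<union> {diag d})"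
    from dir_cases[OF this] show "(a,b) \<in> D \<longleftrightarrow> (b,a) \<notin> D"
      unfolding D by (elim disjE conjE; simp add: mkD_def mem_mkB mem_mkX)
  qed
qed

lemma ex_perm:
  assumes "distinct [a,b,c]"
  shows "(\<exists>v0 v1 v2. {a,b,c} = {v0,v1,v2} \<and> distinct [v0,v1,v2] \<and> P v0 v1 v2) \<longleftrightarrow>
    (P a b c \<or> P a c b \<or> P b a c \<or> P b c a \<or> P c a b \<or> P c b a)"
proof
  assume "\<exists>v0 v1 v2. {a,b,c} = {v0,v1,v2} \<and> distinct [v0,v1,v2] \<and> P v0 v1 v2"
  then obtain v0 v1 v2 where h: "{a,b,c} = {v0,v1,v2}" "distinct [v0,v1,v2]" "P v0 v1 v2" by blast
  from h(1) have "v0 \<in> {a,b,c}" "v1 \<in> {a,b,c}" "v2 \<in> {a,b,c}" by auto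
  with h(2,3) assms show "P a b c \<or> P a c b \<or> P b a c \<or> P b c a \<or> P c a b \<or> P c b a"
    by auto
next
  assume "P a b c \<or> P a c b \<or> P b a c \<or> P b c a \<or> P c a b \<or> P c b a"
  with assms show "\<exists>v0 v1 v2. {a,b,c} = {v0,v1,v2} \<and> distinct [v0,v1,v2] \<and> P v0 v1 v2"
    by (elim disjE; (intro exI conjI; assumption?)) auto
qed

lemma bt: "distinct [a,b,c] \<Longrightarrow> branched_tri D {a,b,c} \<longleftrightarrow>
  (let P = (\<lambda>v0 v1 v2. (v0,v1) \<in> D \<and> (v1,v2) \<in> D \<and> (v0,v2) \<in> D) in
   (P a b c \<or> P a c b \<or> P b a c \<or> P b c a \<or> P c a b \<or> P c b a))"
  unfolding branched_tri_def Let_def by (rule ex_perm[where P="\<lambda>v0 v1 v2. (v0,v1) \<in> D \<and> (v1,v2) \<in> D \<and> (v0,v2) \<in> D"])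

lemma st: "distinct [a,b,c] \<Longrightarrow> sgn_tri eps D {a,b,c} s \<longleftrightarrow>
  (let P = (\<lambda>v0 v1 v2. (v0,v1) \<in> D \<and> (v1,v2) \<in> D \<and> (v0,v2) \<in> D \<and> sgn (eps * qdet v0 v1 v2) = s) in
   (P a b c \<or> P a c b \<or> P b a c \<or> P b c a \<or> P c a b \<or> P c b a))"
  unfolding sgn_tri_def Let_def by (rule ex_perm[where P="\<lambda>v0 v1 v2. (v0,v1) \<in> D \<and> (v1,v2) \<in> D \<and> (v0,v2) \<in> D \<and> sgn (eps * qdet v0 v1 v2) = s"])


lemma compr: "{f t | t. t \<in> Q \<and> P t} = f ` {t \<in> Q. P t}" by auto

lemma filt2: "{t \<in> {A,B}. P t} = (if P A then {A} else {}) \<union> (if P B then {B} else {})"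
  by auto

lemma tneq: "{0,1,2::nat} \<noteq> {0,2,3}" "{0,1,3::nat} \<noteq> {1,2,3}"
proof -
  have "1 \<in> {0,1,2::nat}" "1 \<notin> {0,2,3::nat}" "0 \<in> {0,1,3::nat}" "0 \<notin> {1,2,3::nat}" by auto
  then show "{0,1,2::nat} \<noteq> {0,2,3}" "{0,1,3::nat} \<noteq> {1,2,3}" by blast+
qed

lemma SRF: "S_region s eps False D =
     (if sgn_tri eps D {0,1,2} s then Hq {0,1,2} else {}) \<union> (if sgn_tri eps D {0,2,3} s then Hq {0,2,3} else {})"
  unfolding S_region_def quad_tris_def if_False compr filt2 Hq_def
  by (cases "sgn_tri eps D {0,1,2} s"; cases "sgn_tri eps D {0,2,3} s") (simp_all add: Un_commute add.commute)

lemma SRT: "S_region s eps True D =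
     (if sgn_tri eps D {0,1,3} s then Hq {0,1,3} else {}) \<union> (if sgn_tri eps D {1,2,3} s then Hq {1,2,3} else {})"
  unfolding S_region_def quad_tris_def if_True compr filt2 Hq_def
  by (cases "sgn_tri eps D {0,1,3} s"; cases "sgn_tri eps D {1,2,3} s") (simp_all add: Un_commute add.commute)

lemma SBF: "S_bdry s eps False D = (\<lambda>e.
     (if sgn_tri eps D {0,1,2} s then tri_bdry eps {0,1,2} e else 0) + (if sgn_tri eps D {0,2,3} s then tri_bdry eps {0,2,3} e else 0))"
  unfolding S_bdry_def quad_tris_def if_False filt2
  using tneq by (cases "sgn_tri eps D {0,1,2} s"; cases "sgn_tri eps D {0,2,3} s") (simp_all add: Un_commute add.commute)

lemma SBT: "S_bdry s eps True D = (\<lambda>e.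
     (if sgn_tri eps D {0,1,3} s then tri_bdry eps {0,1,3} e else 0) + (if sgn_tri eps D {1,2,3} s then tri_bdry eps {1,2,3} e else 0))"
  unfolding S_bdry_def quad_tris_def if_True filt2
  using tneq by (cases "sgn_tri eps D {0,1,3} s"; cases "sgn_tri eps D {1,2,3} s") (simp_all add: Un_commute add.commute)

lemma bsum: "tri_bdry eps {0,1,2} e + tri_bdry eps {0,2,3} e = tri_bdry eps {0,1,3} e + tri_bdry eps {1,2,3} e"
proof -
  obtain a b where e: "e = (a,b)" by force
  consider "a \<in> {0,1,2,3} \<and> b \<in> {0,1,2,3}" | "a \<notin> {0,1,2,3}" | "b \<notin> {0,1,2,3}" by blast
  then show ?thesis
  proof cases
    case 1
    then show ?thesis unfolding e
      by (elim conjE insertE emptyE; simp add: tri_bdry_def qdet_def corner_def insert_Diff_if)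
  next
    case 2 then show ?thesis unfolding e tri_bdry_def by auto
  next
    case 3 then show ?thesis unfolding e tri_bdry_def by auto
  qed
qed


lemma mkD_eqX: "mkD d p0 p1 p2 p3 x = mkD d p0 p1 p2 p3 z \<Longrightarrow> x = z"
proof -
  assume h: "mkD d p0 p1 p2 p3 x = mkD d p0 p1 p2 p3 z"
  have "(if d then (1,3) else (0,2)) \<in> mkD d p0 p1 p2 p3 x \<longleftrightarrow> (if d then (1,3) else (0,2)) \<in> mkD d p0 p1 p2 p3 z"
    using h by simp
  then show "x = z" by (cases d) (simp_all add: mkD_def mem_mkB mem_mkX)
qed

lemma bq_orients: "branched_quad d D \<Longrightarrow> \<exists>p0 p1 p2 p3 x. D = mkD d p0 p1 p2 p3 x"
  unfolding branched_quad_def orients_mk by blast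

lemma bq_eq: "branched_quad d (mkD d p0 p1 p2 p3 x) \<longleftrightarrow> (\<forall>t\<in>quad_tris d. branched_tri (mkD d p0 p1 p2 p3 x) t)"
  unfolding branched_quad_def orients_mk by blast

lemma forced_iff:
  assumes bf: "b_flip d1 (mkD d1 p0 p1 p2 p3 x) (mkD d2 p0 p1 p2 p3 y)" and d2: "d2 = (\<not> d1)"
  shows "forced d1 (mkD d1 p0 p1 p2 p3 x) (mkD d2 p0 p1 p2 p3 y) \<longleftrightarrow>
     (\<forall>z. branched_quad d2 (mkD d2 p0 p1 p2 p3 z) \<longrightarrow> z = y)"
proof
  assume F: "forced d1 (mkD d1 p0 p1 p2 p3 x) (mkD d2 p0 p1 p2 p3 y)"
  show "\<forall>z. branched_quad d2 (mkD d2 p0 p1 p2 p3 z) \<longrightarrow> z = y"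
  proof (intro allI impI)
    fix z assume bq: "branched_quad d2 (mkD d2 p0 p1 p2 p3 z)"
    have "b_flip d1 (mkD d1 p0 p1 p2 p3 x) (mkD d2 p0 p1 p2 p3 z)"
      using bf bq d2 unfolding b_flip_def by (simp add: mkB_int)
    with F have "mkD d2 p0 p1 p2 p3 z = mkD d2 p0 p1 p2 p3 y" unfolding forced_def by blast
    then show "z = y" by (rule mkD_eqX)
  qed
next
  assume H: "\<forall>z. branched_quad d2 (mkD d2 p0 p1 p2 p3 z) \<longrightarrow> z = y"
  show "forced d1 (mkD d1 p0 p1 p2 p3 x) (mkD d2 p0 p1 p2 p3 y)"
    unfolding forced_def
  proof (intro conjI allI impI)
    show "b_flip d1 (mkD d1 p0 p1 p2 p3 x) (mkD d2 p0 p1 p2 p3 y)" by (rule bf)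
    fix E assume bE: "b_flip d1 (mkD d1 p0 p1 p2 p3 x) E"
    then have bqE: "branched_quad d2 E" using d2 unfolding b_flip_def by simp
    then obtain q0 q1 q2 q3 w where E: "E = mkD d2 q0 q1 q2 q3 w" using bq_orients by blast
    from bE have "mkB p0 p1 p2 p3 = mkB q0 q1 q2 q3" unfolding b_flip_def E by (simp add: mkB_int)
    then have q: "q0 = p0" "q1 = p1" "q2 = p2" "q3 = p3" by (simp_all add: mkB_inj)
    with bqE E H have "w = y" by simp
    with E q show "E = mkD d2 p0 p1 p2 p3 y" by simp
  qed
qed


lemma bt012: "branched_tri (mkD False p0 p1 p2 p3 x) {0,1,2} \<longleftrightarrow> \<not>(p0 \<and> p1 \<and> \<not>x) \<and> \<not>(\<not>p0 \<and> \<not>p1 \<and> x)"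
  by (cases p0; cases p1; cases x) (simp_all add: bt mkD_def mem_mkB mem_mkX)
lemma bt023: "branched_tri (mkD False p0 p1 p2 p3 x) {0,2,3} \<longleftrightarrow> \<not>(x \<and> p2 \<and> p3) \<and> \<not>(\<not>x \<and> \<not>p2 \<and> \<not>p3)"
  by (cases p2; cases p3; cases x) (simp_all add: bt mkD_def mem_mkB mem_mkX)
lemma bt013: "branched_tri (mkD True p0 p1 p2 p3 y) {0,1,3} \<longleftrightarrow> \<not>(p0 \<and> y \<and> p3) \<and> \<not>(\<not>p0 \<and> \<not>y \<and> \<not>p3)"
  by (cases p0; cases p3; cases y) (simp_all add: bt mkD_def mem_mkB mem_mkX)
lemma bt123: "branched_tri (mkD True p0 p1 p2 p3 y) {1,2,3} \<longleftrightarrow> \<not>(p1 \<and> p2 \<and> \<not>y) \<and> \<not>(\<not>p1 \<and> \<not>p2 \<and> y)"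
  by (cases p1; cases p2; cases y) (simp_all add: bt mkD_def mem_mkB mem_mkX)

lemma st012: "eps = 1 \<or> eps = -1 \<Longrightarrow> sgn_tri eps (mkD False p0 p1 p2 p3 x) {0,1,2} s \<longleftrightarrow>
   branched_tri (mkD False p0 p1 p2 p3 x) {0,1,2} \<and> (if (p0 \<longleftrightarrow> (p1 \<longleftrightarrow> x)) then eps else - eps) = s"
  unfolding bt012 by (elim disjE; cases p0; cases p1; cases x) (simp_all add: st mkD_def mem_mkB mem_mkX qdet_def corner_def)
lemma st023: "eps = 1 \<or> eps = -1 \<Longrightarrow> sgn_tri eps (mkD False p0 p1 p2 p3 x) {0,2,3} s \<longleftrightarrow>
   branched_tri (mkD False p0 p1 p2 p3 x) {0,2,3} \<and> (if (x \<longleftrightarrow> (p2 \<longleftrightarrow> \<not>p3)) then eps else - eps) = s"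
  unfolding bt023 by (elim disjE; cases p2; cases p3; cases x) (simp_all add: st mkD_def mem_mkB mem_mkX qdet_def corner_def)
lemma st013: "eps = 1 \<or> eps = -1 \<Longrightarrow> sgn_tri eps (mkD True p0 p1 p2 p3 y) {0,1,3} s \<longleftrightarrow>
   branched_tri (mkD True p0 p1 p2 p3 y) {0,1,3} \<and> (if (p0 \<longleftrightarrow> (y \<longleftrightarrow> \<not>p3)) then eps else - eps) = s"
  unfolding bt013 by (elim disjE; cases p0; cases p3; cases y) (simp_all add: st mkD_def mem_mkB mem_mkX qdet_def corner_def)
lemma st123: "eps = 1 \<or> eps = -1 \<Longrightarrow> sgn_tri eps (mkD True p0 p1 p2 p3 y) {1,2,3} s \<longleftrightarrow>
   branched_tri (mkD True p0 p1 p2 p3 y) {1,2,3} \<and> (if (p1 \<longleftrightarrow> (p2 \<longleftrightarrow> y)) then eps else - eps) = s"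
  unfolding bt123 by (elim disjE; cases p1; cases p2; cases y) (simp_all add: st mkD_def mem_mkB mem_mkX qdet_def corner_def)



lemmas tri_facts = bt012 bt023 bt013 bt123 st012 st023 st013 st123
lemmas tri_facts1 = tri_facts[unfolded One_nat_def]
lemmas hfacts = Hsq Hne Hneq bsum
lemmas hfacts1 = hfacts[unfolded One_nat_def]

lemma coreF:
  assumes "branched_quad False (mkD False p0 p1 p2 p3 x)" "branched_quad True (mkD True p0 p1 p2 p3 y)"
  shows "(((\<forall>z. branched_quad True (mkD True p0 p1 p2 p3 z) \<longrightarrow> z = y) \<and> (\<forall>z. branched_quad False (mkD False p0 p1 p2 p3 z) \<longrightarrow> z = x)) \<longleftrightarrow>
     ((\<forall>z. branched_quad True (mkD True p0 p1 p2 p3 z) \<longrightarrow> z = y) \<or> (\<forall>z. branched_quad False (mkD False p0 p1 p2 p3 z) \<longrightarrow> z = x)) \<and>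
     (\<forall>eps \<in> {1, -1}. \<forall>s \<in> {1, -1}. S_region s eps False (mkD False p0 p1 p2 p3 x) = S_region s eps True (mkD True p0 p1 p2 p3 y)))
   \<and> (((\<forall>z. branched_quad True (mkD True p0 p1 p2 p3 z) \<longrightarrow> z = y) \<and> (\<forall>z. branched_quad False (mkD False p0 p1 p2 p3 z) \<longrightarrow> z = x)) \<longrightarrow>
     (\<forall>eps \<in> {1, -1}. \<forall>s \<in> {1, -1}. S_bdry s eps False (mkD False p0 p1 p2 p3 x) = S_bdry s eps True (mkD True p0 p1 p2 p3 y)))"
  using assms
  unfolding bq_eq SRF SRT SBF SBT
  by (cases p0; cases p1; cases p2; cases p3; cases x; cases y)
    (simp_all add: quad_tris_def tri_facts tri_facts1 hfacts hfacts1 all_bool_eq)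

lemma coreT:
  assumes "branched_quad True (mkD True p0 p1 p2 p3 x)" "branched_quad False (mkD False p0 p1 p2 p3 y)"
  shows "(((\<forall>z. branched_quad False (mkD False p0 p1 p2 p3 z) \<longrightarrow> z = y) \<and> (\<forall>z. branched_quad True (mkD True p0 p1 p2 p3 z) \<longrightarrow> z = x)) \<longleftrightarrow>
     ((\<forall>z. branched_quad False (mkD False p0 p1 p2 p3 z) \<longrightarrow> z = y) \<or> (\<forall>z. branched_quad True (mkD True p0 p1 p2 p3 z) \<longrightarrow> z = x)) \<and>
     (\<forall>eps \<in> {1, -1}. \<forall>s \<in> {1, -1}. S_region s eps True (mkD True p0 p1 p2 p3 x) = S_region s eps False (mkD False p0 p1 p2 p3 y)))
   \<and> (((\<forall>z. branched_quad False (mkD False p0 p1 p2 p3 z) \<longrightarrow> z = y) \<and> (\<forall>z. branched_quad True (mkD True p0 p1 p2 p3 z) \<longrightarrow> z = x)) \<longrightarrow>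
     (\<forall>eps \<in> {1, -1}. \<forall>s \<in> {1, -1}. S_bdry s eps True (mkD True p0 p1 p2 p3 x) = S_bdry s eps False (mkD False p0 p1 p2 p3 y)))"
  using assms
  unfolding bq_eq SRF SRT SBF SBT
  by (cases p0; cases p1; cases p2; cases p3; cases x; cases y)
    (simp_all add: quad_tris_def tri_facts tri_facts1 hfacts hfacts1 all_bool_eq)


theorem proposition2p2:
  assumes "b_flip d D D'"
  shows "(non_ambiguous d D D' \<longleftrightarrow>
            sliding d D D' \<and>
            (\<forall>eps \<in> {1, -1}. \<forall>s \<in> {1, -1}. S_region s eps d D = S_region s eps (\<not> d) D'))
       \<and> (non_ambiguous d D D' \<longrightarrow>
            (\<forall>eps \<in> {1, -1}. \<forall>s \<in> {1, -1}. S_bdry s eps d D = S_bdry s eps (\<not> d) D'))"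
proof -
  have bq1: "branched_quad d D" and bq2: "branched_quad (\<not> d) D'"
    and bd: "D \<inter> directed bdry_edges = D' \<inter> directed bdry_edges"
    using assms unfolding b_flip_def by auto
  obtain p0 p1 p2 p3 x where D: "D = mkD d p0 p1 p2 p3 x" using bq_orients[OF bq1] by blast
  obtain q0 q1 q2 q3 y where D': "D' = mkD (\<not> d) q0 q1 q2 q3 y" using bq_orients[OF bq2] by blast
  from bd have "mkB p0 p1 p2 p3 = mkB q0 q1 q2 q3" unfolding D D' mkB_int .
  then have q: "q0 = p0" "q1 = p1" "q2 = p2" "q3 = p3" by (simp_all add: mkB_inj)
  have bf: "b_flip d (mkD d p0 p1 p2 p3 x) (mkD (\<not> d) p0 p1 p2 p3 y)"
    using assms unfolding D D' q .
  have bf': "b_flip (\<not> d) (mkD (\<not> d) p0 p1 p2 p3 y) (mkD d p0 p1 p2 p3 x)"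
    using bf unfolding b_flip_def by auto
  have F1: "forced d (mkD d p0 p1 p2 p3 x) (mkD (\<not> d) p0 p1 p2 p3 y) \<longleftrightarrow>
     (\<forall>z. branched_quad (\<not> d) (mkD (\<not> d) p0 p1 p2 p3 z) \<longrightarrow> z = y)"
    by (rule forced_iff[OF bf]) simp
  have F2: "forced (\<not> d) (mkD (\<not> d) p0 p1 p2 p3 y) (mkD d p0 p1 p2 p3 x) \<longleftrightarrow>
     (\<forall>z. branched_quad d (mkD d p0 p1 p2 p3 z) \<longrightarrow> z = x)"
    by (rule forced_iff[OF bf']) simp
  have b1: "branched_quad d (mkD d p0 p1 p2 p3 x)" using bq1 unfolding D .
  have b2: "branched_quad (\<not> d) (mkD (\<not> d) p0 p1 p2 p3 y)" using bq2 unfolding D' q .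
  show ?thesis
  proof (cases d)
    case True
    with b1 b2 have "branched_quad True (mkD True p0 p1 p2 p3 x)" "branched_quad False (mkD False p0 p1 p2 p3 y)" by simp_all
    from coreT[OF this] True show ?thesis unfolding D D' q non_ambiguous_def sliding_def F1 F2 by simp
  next
    case False
    with b1 b2 have "branched_quad False (mkD False p0 p1 p2 p3 x)" "branched_quad True (mkD True p0 p1 p2 p3 y)" by simp_all
    from coreF[OF this] False show ?thesis unfolding D D' q non_ambiguous_def sliding_def F1 F2 by simp
  qed
qed


end
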